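(* Let $3 \leq m < n$ be integers, let $p_k$ denote the $k$-th prime (with $p_1=2$), and let $O_k = \frac{p_k^2-1}{6}$. Then \[ O_n \not\equiv O_m \pmod{5 \cdot 7 \cdot 11 \cdots p_m}, \] where the modulus $5 \cdot 7 \cdots p_m = \prod_{i=3}^{m} p_i$ is the product of all primes from $5$ up to $p_m$. *)

theory Defs
  imports "HOL-Number_Theory.Number_Theory" "HOL-Library.Infinite_Set"
begin

(* p k = the k-th prime, 1-indexed: p 1 = 2, p 2 = 3, p 3 = 5, ... *)
definition nth_prime :: "nat \<Rightarrow> nat" where
  "nth_prime k = enumerate {q. prime q} (k - 1)"

(* O k = (p_k^2 - 1)/6; for k >= 3 (p_k >= 5) this division is exact *)
definition O_num :: "nat \<Rightarrow> int" where
  "O_num k = (int (nth_prime k) ^ 2 - 1) div 6"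

end

theory Submission
  imports Defs
begin

lemma inf_primes: "infinite {q::nat. prime q}"
  using primes_infinite by simp

lemma nth_prime_prime: "prime (nth_prime k)"
  unfolding nth_prime_def using enumerate_in_set[OF inf_primes] by blast

lemma nth_prime_mono: "1 \<le> i \<Longrightarrow> i < j \<Longrightarrow> nth_prime i < nth_prime j"
  unfolding nth_prime_def by (intro enumerate_mono[OF _ inf_primes]) simp

lemma nth_prime_ge5: assumes "3 \<le> k" shows "nth_prime k \<ge> 5"
proof -
  have "nth_prime 1 < nth_prime 2" by (rule nth_prime_mono) auto
  moreover have "nth_prime 2 < nth_prime k" by (rule nth_prime_mono) (use assms in auto)
  moreover have "nth_prime 1 \<ge> 2" using nth_prime_prime prime_ge_2_nat by blast
  ultimately have "nth_prime k \<ge> 4" by linarith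
  moreover have "nth_prime k \<noteq> 4"
  proof
    assume "nth_prime k = 4"
    with nth_prime_prime[of k] have "prime (4::nat)" by simp
    then have "\<forall>m. m dvd (4::nat) \<longrightarrow> m = 1 \<or> m = 4" unfolding prime_nat_iff by blast
    moreover have "(2::nat) dvd 4" by simp
    ultimately have "(2::nat) = 1 \<or> (2::nat) = 4" by blast
    then show False by simp
  qed
  ultimately show ?thesis by linarith
qed

lemma six_dvd: fixes q :: int assumes "prime q" "q \<ge> 5" shows "6 dvd q^2 - 1"
proof -
  have "\<not> 2 dvd q"
  proof
    assume D: "2 dvd q"
    have A: "\<forall>m. m \<ge> 0 \<and> m dvd q \<longrightarrow> m = 1 \<or> m = q" using assms(1) unfolding prime_int_iff by blast
    have "(2::int) = 1 \<or> 2 = q" using A[rule_format, of 2] D by simp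
    with assms(2) show False by simp
  qed
  moreover have "\<not> 3 dvd q"
  proof
    assume D: "3 dvd q"
    have A: "\<forall>m. m \<ge> 0 \<and> m dvd q \<longrightarrow> m = 1 \<or> m = q" using assms(1) unfolding prime_int_iff by blast
    have "(3::int) = 1 \<or> 3 = q" using A[rule_format, of 3] D by simp
    with assms(2) show False by simp
  qed
  ultimately have "q mod 6 = 1 \<or> q mod 6 = 5"
    by presburger
  then obtain k r where q: "q = 6*k + r" "r = 1 \<or> r = 5"
    by (metis mod_mult_div_eq add.commute)
  have "q^2 - 1 = 6 * (6*k^2 + 2*k*r) + (r^2 - 1)" unfolding q(1) by (simp add: power2_eq_square algebra_simps)
  moreover have "6 dvd r^2 - 1" using q(2) by auto
  ultimately show ?thesis by (metis dvd_add dvd_triv_left)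
qed

theorem theorem4:
  fixes m n :: nat
  assumes "3 \<le> m" and "m < n"
  shows "\<not> [O_num n = O_num m] (mod (\<Prod>i\<in>{3..m}. int (nth_prime i)))"
proof
  assume H: "[O_num n = O_num m] (mod (\<Prod>i\<in>{3..m}. int (nth_prime i)))"
  define a where "a = int (nth_prime m)"
  define b where "b = int (nth_prime n)"
  have pa: "prime a" unfolding a_def using nth_prime_prime by simp
  have pb: "prime b" unfolding b_def using nth_prime_prime by simp
  have a5: "a \<ge> 5" unfolding a_def using nth_prime_ge5[OF assms(1)] by simp
  have ab: "a < b" unfolding a_def b_def using nth_prime_mono[OF _ assms(2)] assms(1) by simp
  have b5: "b \<ge> 5" using a5 ab by simp
  have "a dvd (\<Prod>i\<in>{3..m}. int (nth_prime i))" unfolding a_def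
    using assms(1) by (intro dvd_prodI) simp_all
  then have "[O_num n = O_num m] (mod a)" by (rule cong_dvd_modulus[OF H])
  hence "[(b^2-1) div 6 = (a^2-1) div 6] (mod a)" unfolding O_num_def a_def b_def .
  hence "[6 * ((b^2-1) div 6) = 6 * ((a^2-1) div 6)] (mod a)" by (rule cong_scalar_left)
  moreover have "6 * ((b^2-1) div 6) = b^2-1" using six_dvd[OF pb b5] by simp
  moreover have "6 * ((a^2-1) div 6) = a^2-1" using six_dvd[OF pa a5] by simp
  ultimately have "[b^2-1 = a^2-1] (mod a)" by simp
  hence "[b^2-1+1 = a^2-1+1] (mod a)" by (rule cong_add) (rule cong_refl)
  hence "[b^2 = a^2] (mod a)" by simp
  moreover have "[a^2 = 0] (mod a)" by (simp add: cong_0_iff)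
  ultimately have "[b^2 = 0] (mod a)" by (rule cong_trans)
  hence "a dvd b^2" by (simp add: cong_0_iff)
  hence "a dvd b" using prime_dvd_power[OF pa] by blast
  moreover have A: "\<forall>m. m \<ge> 0 \<and> m dvd b \<longrightarrow> m = 1 \<or> m = b" using pb unfolding prime_int_iff by blast
  ultimately have "a = 1 \<or> a = b" using A[rule_format, of a] a5 by simp
  with a5 ab show False by simp
qed

end
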